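(* Let $\Sigma$ be an alphabet and let $\mathcal P=(n,\Gamma,I,M,P,p_0,l)$ be a $\mathbb B\langle\Sigma\cup\{\epsilon\}\rangle$-$\omega$-pushdown automaton over $(\mathbb B\langle\langle\Sigma^*\rangle\rangle,\mathbb B\langle\langle\Sigma^\omega\rangle\rangle)$, with $l\in\{0,\dots,n\}$. Let $\sigma_{x_0}=I(M^* )_{p_0,\epsilon}P$ and $\tau_{z_0}=I(M^{\omega,l})_{p_0}$ be the $x_0$- and $z_0$-components of the solution of order $l$, regarded (via the isomorphism $\mathbb B\langle\langle\Sigma^*\rangle\rangle\times\mathbb B\langle\langle\Sigma^\omega\rangle\rangle\cong 2^{\Sigma^*}\times2^{\Sigma^\omega}$) as a language of finite words and a language of infinite words. Then $$L(G_l)=\sigma_{x_0}\cup\tau_{z_0}.$$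
   Context: $\mathbb B=(\{0,1\},\vee,\wedge,{}^*,0,1)$ with $0^*=1^*=1$ is a complete star-omega semiring, and $(\mathbb B\langle\langle\Sigma^*\rangle\rangle,\mathbb B\langle\langle\Sigma^\omega\rangle\rangle)$ (power series over finite/infinite words, identified with languages) is a complete semiring-semimodule pair (infinite sums = unions, infinite products = concatenations). For a series $s$ and word $a$, $(s,a)$ is the coefficient of $a$ in $s$; $\mathbb B\langle\Sigma\cup\{\epsilon\}\rangle$ is the set of series with support in $\Sigma\cup\{\epsilon\}$. A pushdown transition matrix $M$ ($\Gamma^*\times\Gamma^*$ matrix with $n\times n$ blocks over $\mathbb B\langle\Sigma\cup\{\epsilon\}\rangle$) satisfies (i) for each $p\in\Gamma$ only finitely many blocks $M_{p,\pi}$ are nonzero, and (ii) $M_{\pi_1,\pi_2}=M_{p,\pi}$ if $\pi_1=p\pi'$, $\pi_2=\pi\pi'$ for some $p\in\Gamma$, $\pi,\pi'\in\Gamma^*$, and $0$ otherwise. The automaton consists of states $1,\dots,n$, pushdown alphabet $\Gamma$, such an $M$, $I\in(\mathbb B\langle\Sigma\cup\{\epsilon\}\rangle)^{1\times n}$, $P\in(\mathbb B\langle\Sigma\cup\{\epsilon\}\rangle)^{n\times 1}$, $p_0\in\Gamma$, $l$. $M^*=\sum_{m\ge0}M^m$ with blocks $(M^* )_{\pi,\pi'}$; with $P_l=\{(j_1,j_2,\dots)\in\{1,\dots,n\}^\omega\mid j_t\le l\text{ for infinitely many }t\}$, $((M^{\omega,l})_\pi)_i=\sum_{\pi_1,\pi_2,\ldots\in\Gamma^*}\sum_{(j_1,j_2,\ldots)\in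 P_l}(M_{\pi,\pi_1})_{i,j_1}(M_{\pi_1,\pi_2})_{j_1,j_2}\cdots$. The mixed context-free grammar $G_l=(X,Z,\Sigma,P_X,P_Z,x_0,z_0,l)$ has variables $X=\{x_0\}\cup\{[i,p,j]\mid 1\le i,j\le n,\ p\in\Gamma\}$ (for finite derivations), $Z=\{z_0\}\cup\{[i,p]\mid1\le i\le n,\ p\in\Gamma\}$ (for infinite derivations), and productions: $P_X$: $x_0\to a_1[m_1,p_0,m_2]a_2$ whenever $(I_{m_1},a_1)\ne0$, $(P_{m_2},a_2)\ne0$, $a_1,a_2\in\Sigma\cup\{\epsilon\}$; and $[i,p,j]\to a[m_1,p_1,m_2][m_2,p_2,m_3]\cdots[m_k,p_k,j]$ whenever $k\ge0$, $p_1,\dots,p_k\in\Gamma$, $1\le m_1,\dots,m_k\le n$, $a\in\Sigma\cup\{\epsilon\}$, $((M_{p,p_1\dots p_k})_{i,m_1},a)\ne0$ (for $k=0$ the production is $[i,p,j]\to a$ with $((M_{p,\epsilon})_{i,j},a)\ne0$). $P_Z$: $z_0\to a[m,p_0]$ whenever $(I_m,a)\ne0$, $a\in\Sigma\cup\{\epsilon\}$; and $[i,p]\to a[m_1,p_1,m_2]\cdots[m_{j-1},p_{j-1},m_j][m_j,p_j]$ whenever $k\ge1$, $1\le j\le k$, $p_1,\dots,p_k\in\Gamma$, $1\le m_1,\dots,m_j\le n$, $a\in\Sigma\cup\{\epsilon\}$, $((M_{p,p_1\dots p_k})_{i,m_1},a)\ne0$. Finite leftmost derivations $\Rightarrow_L^*$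 with $P_X$ are as usual. An infinite derivation of $w\in\Sigma^\omega$ is a sequence $z_0\Rightarrow\alpha_0[i_0,q_0]\Rightarrow_L^*w_0[i_0,q_0]\Rightarrow w_0\alpha_1[i_1,q_1]\Rightarrow_L^*w_0w_1[i_1,q_1]\Rightarrow\cdots\Rightarrow_L^* w_0\cdots w_m[i_m,q_m]\Rightarrow w_0\cdots w_m\alpha_{m+1}[i_{m+1},q_{m+1}]\Rightarrow_L^*\cdots$ where $z_0\to\alpha_0[i_0,q_0]$ and $[i_m,q_m]\to\alpha_{m+1}[i_{m+1},q_{m+1}]$ are productions in $P_Z$, each $\alpha_m\Rightarrow_L^* w_m\in\Sigma^*$ is a finite leftmost derivation with $P_X$, and $w=w_0w_1w_2\cdots$. It is a derivation $z_0\Rightarrow_L^{\omega,l}w$ if, letting $i_m^1,\dots,i_m^{t_m}$ be the first components $i$ of the triple variables $[i,p,j]$ rewritten (in order) in $\alpha_m\Rightarrow_L^*w_m$, the sequence $i_0,i_1^1,\dots,i_1^{t_1},i_1,i_2^1,\dots,i_2^{t_2},i_2,\dots$ lies in $P_l$. Then $L(G_l)=\{w\in\Sigma^*\mid x_0\Rightarrow_L^*w\}\cup\{w\in\Sigma^\omega\mid z_0\Rightarrow_L^{\omega,l}w\}$. *)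

theory Defs
  imports Main
begin

(* Conventions:
   - Sigma is the type 'a, the pushdown alphabet Gamma is the type 'g.
   - Elements of Sigma \<union> {eps} are 'a option (None = eps).  A series in
     B<Sigma \<union> {eps}> is identified with its support, an 'a option set.
   - States are the naturals 1..n.
   - The pushdown transition matrix M is given by its blocks
     Mb p \<pi> = M_{p,\<pi>} (an n x n matrix, entries Mb p \<pi> i j).
   - Finite words are 'a list, infinite words are nat \<Rightarrow> 'a. *)

definition oword :: "'a option \<Rightarrow> 'a list" where
  "oword a = (case a of None \<Rightarrow> [] | Some x \<Rightarrow> [x])"

(* infinite concatenation u 0 u 1 u 2 ... which is an omega-word w
   (requires infinitely many nonempty factors) *)
definition concat_inf :: "(nat \<Rightarrow> 'b list) \<Rightarrow> (nat \<Rightarrow> 'b) \<Rightarrow> bool" where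
  "concat_inf u w \<longleftrightarrow>
     (\<forall>k. \<exists>m. k < (\<Sum>i<m. length (u i))) \<and>
     (\<forall>m t. t < length (u m) \<longrightarrow> w ((\<Sum>i<m. length (u i)) + t) = u m ! t)"

definition conc_fw :: "'a list \<Rightarrow> (nat \<Rightarrow> 'a) \<Rightarrow> (nat \<Rightarrow> 'a)" where
  "conc_fw u w = (\<lambda>t. if t < length u then u ! t else w (t - length u))"

definition Pl :: "nat \<Rightarrow> nat \<Rightarrow> (nat \<Rightarrow> nat) \<Rightarrow> bool" where
  "Pl n l s \<longleftrightarrow> (\<forall>t. s t \<in> {1..n}) \<and> infinite {t. s t \<le> l}"

definition pd_finite :: "nat \<Rightarrow> ('g \<Rightarrow> 'g list \<Rightarrow> nat \<Rightarrow> nat \<Rightarrow> 'a option set) \<Rightarrow> bool" where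
  "pd_finite n Mb \<longleftrightarrow>
     (\<forall>p. finite {\<pi>. \<exists>i\<in>{1..n}. \<exists>j\<in>{1..n}. Mb p \<pi> i j \<noteq> {}})"

(* condition (ii): the entries (M_{\<pi>1,\<pi>2})_{i,j} of the full matrix *)
definition Mblock :: "('g \<Rightarrow> 'g list \<Rightarrow> nat \<Rightarrow> nat \<Rightarrow> 'a option set)
    \<Rightarrow> 'g list \<Rightarrow> 'g list \<Rightarrow> nat \<Rightarrow> nat \<Rightarrow> 'a option set" where
  "Mblock Mb \<pi>1 \<pi>2 i j =
     {a. \<exists>p \<pi> \<pi>'. \<pi>1 = p # \<pi>' \<and> \<pi>2 = \<pi> @ \<pi>' \<and> a \<in> Mb p \<pi> i j}"

fun Mpow :: "nat \<Rightarrow> ('g \<Rightarrow> 'g list \<Rightarrow> nat \<Rightarrow> nat \<Rightarrow> 'a option set) \<Rightarrow> nat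
    \<Rightarrow> 'g list \<Rightarrow> 'g list \<Rightarrow> nat \<Rightarrow> nat \<Rightarrow> 'a list set" where
  "Mpow n Mb 0 \<pi>1 \<pi>2 i j = (if \<pi>1 = \<pi>2 \<and> i = j then {[]} else {})"
| "Mpow n Mb (Suc m) \<pi>1 \<pi>2 i j =
     {oword a @ w | a w. \<exists>\<pi> k. k \<in> {1..n} \<and> a \<in> Mblock Mb \<pi>1 \<pi> i k \<and>
                                w \<in> Mpow n Mb m \<pi> \<pi>2 k j}"

definition Mstar :: "nat \<Rightarrow> ('g \<Rightarrow> 'g list \<Rightarrow> nat \<Rightarrow> nat \<Rightarrow> 'a option set)
    \<Rightarrow> 'g list \<Rightarrow> 'g list \<Rightarrow> nat \<Rightarrow> nat \<Rightarrow> 'a list set" where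
  "Mstar n Mb \<pi>1 \<pi>2 i j = (\<Union>m. Mpow n Mb m \<pi>1 \<pi>2 i j)"

definition Momega :: "nat \<Rightarrow> ('g \<Rightarrow> 'g list \<Rightarrow> nat \<Rightarrow> nat \<Rightarrow> 'a option set) \<Rightarrow> nat
    \<Rightarrow> 'g list \<Rightarrow> nat \<Rightarrow> (nat \<Rightarrow> 'a) set" where
  "Momega n Mb l \<pi> i =
     {w. \<exists>\<pi>s js bs. \<pi>s 0 = \<pi> \<and> js 0 = i \<and>
          (\<forall>t. bs t \<in> Mblock Mb (\<pi>s t) (\<pi>s (Suc t)) (js t) (js (Suc t))) \<and>
          Pl n l (\<lambda>t. js (Suc t)) \<and>
          concat_inf (\<lambda>t. oword (bs t)) w}"

definition sigma_x0 :: "nat \<Rightarrow> (nat \<Rightarrow> 'a option set) \<Rightarrow> ('g \<Rightarrow> 'g list \<Rightarrow> nat \<Rightarrow> nat \<Rightarrow> 'a option set)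
    \<Rightarrow> (nat \<Rightarrow> 'a option set) \<Rightarrow> 'g \<Rightarrow> 'a list set" where
  "sigma_x0 n I Mb P p0 =
     {oword a1 @ u @ oword a2 | a1 u a2. \<exists>i\<in>{1..n}. \<exists>j\<in>{1..n}.
         a1 \<in> I i \<and> u \<in> Mstar n Mb [p0] [] i j \<and> a2 \<in> P j}"

definition tau_z0 :: "nat \<Rightarrow> (nat \<Rightarrow> 'a option set) \<Rightarrow> ('g \<Rightarrow> 'g list \<Rightarrow> nat \<Rightarrow> nat \<Rightarrow> 'a option set)
    \<Rightarrow> 'g \<Rightarrow> nat \<Rightarrow> (nat \<Rightarrow> 'a) set" where
  "tau_z0 n I Mb p0 l =
     {conc_fw (oword a) w | a w. \<exists>i\<in>{1..n}. a \<in> I i \<and> w \<in> Momega n Mb l [p0] i}"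

datatype 'g xvar = X0 | Trip nat 'g nat
datatype ('a, 'g) gsym = T 'a | N "'g xvar"

fun tfst :: "'g xvar \<Rightarrow> nat" where
  "tfst (Trip i p j) = i"
| "tfst X0 = 0"

definition osym :: "'a option \<Rightarrow> ('a, 'g) gsym list" where
  "osym a = map T (oword a)"

(* chain [m1..mk] [p1..pk] j = [m1,p1,m2][m2,p2,m3]...[mk,pk,j] *)
fun chain :: "nat list \<Rightarrow> 'g list \<Rightarrow> nat \<Rightarrow> 'g xvar list" where
  "chain (m # ms) (p # ps) j = Trip m p (case ms of [] \<Rightarrow> j | m' # _ \<Rightarrow> m') # chain ms ps j"
| "chain _ _ j = []"

definition prodX :: "nat \<Rightarrow> (nat \<Rightarrow> 'a option set) \<Rightarrow> ('g \<Rightarrow> 'g list \<Rightarrow> nat \<Rightarrow> nat \<Rightarrow> 'a option set)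
    \<Rightarrow> (nat \<Rightarrow> 'a option set) \<Rightarrow> 'g \<Rightarrow> 'g xvar \<Rightarrow> ('a, 'g) gsym list \<Rightarrow> bool" where
  "prodX n I Mb P p0 A \<gamma> = (case A of
     X0 \<Rightarrow> (\<exists>m1 m2 a1 a2. m1 \<in> {1..n} \<and> m2 \<in> {1..n} \<and> a1 \<in> I m1 \<and> a2 \<in> P m2 \<and>
                 \<gamma> = osym a1 @ [N (Trip m1 p0 m2)] @ osym a2)
   | Trip i p j \<Rightarrow> i \<in> {1..n} \<and> j \<in> {1..n} \<and>
        (\<exists>a ps ms. length ms = length ps \<and> set ms \<subseteq> {1..n} \<and>
           a \<in> Mb p ps i (case ms of [] \<Rightarrow> j | m1 # _ \<Rightarrow> m1) \<and>
           \<gamma> = osym a @ map N (chain ms ps j)))"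

inductive lderiv :: "('g xvar \<Rightarrow> ('a, 'g) gsym list \<Rightarrow> bool)
    \<Rightarrow> ('a, 'g) gsym list \<Rightarrow> 'g xvar list \<Rightarrow> ('a, 'g) gsym list \<Rightarrow> bool"
  for R where
  ld_refl: "lderiv R \<alpha> [] \<alpha>"
| ld_step: "R A \<gamma> \<Longrightarrow> lderiv R (map T u @ \<gamma> @ \<beta>) vs \<delta> \<Longrightarrow>
            lderiv R (map T u @ N A # \<beta>) (A # vs) \<delta>"

(* productions P_Z:  z0 -> a [m,p0]  *)
definition zstart :: "nat \<Rightarrow> (nat \<Rightarrow> 'a option set) \<Rightarrow> 'g
    \<Rightarrow> ('a, 'g) gsym list \<Rightarrow> nat \<times> 'g \<Rightarrow> bool" where
  "zstart n I p0 \<alpha> st \<longleftrightarrow> (\<exists>m a. m \<in> {1..n} \<and> a \<in> I m \<and> \<alpha> = osym a \<and> st = (m, p0))"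

(* productions P_Z:  [i,p] -> a [m1,p1,m2]...[m_{j-1},p_{j-1},m_j] [m_j,p_j] *)
definition zprod :: "nat \<Rightarrow> ('g \<Rightarrow> 'g list \<Rightarrow> nat \<Rightarrow> nat \<Rightarrow> 'a option set)
    \<Rightarrow> nat \<times> 'g \<Rightarrow> ('a, 'g) gsym list \<Rightarrow> nat \<times> 'g \<Rightarrow> bool" where
  "zprod n Mb st \<alpha> st' \<longleftrightarrow> fst st \<in> {1..n} \<and>
     (\<exists>a ps j ms. 1 \<le> j \<and> j \<le> length ps \<and> length ms = j \<and> set ms \<subseteq> {1..n} \<and>
        a \<in> Mb (snd st) ps (fst st) (hd ms) \<and>
        \<alpha> = osym a @ map N (chain (butlast ms) (take (j - 1) ps) (last ms)) \<and>
        st' = (last ms, ps ! (j - 1)))"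

definition LG_fin :: "nat \<Rightarrow> (nat \<Rightarrow> 'a option set) \<Rightarrow> ('g \<Rightarrow> 'g list \<Rightarrow> nat \<Rightarrow> nat \<Rightarrow> 'a option set)
    \<Rightarrow> (nat \<Rightarrow> 'a option set) \<Rightarrow> 'g \<Rightarrow> 'a list set" where
  "LG_fin n I Mb P p0 = {w. \<exists>vs. lderiv (prodX n I Mb P p0) [N X0] vs (map T w)}"

definition LG_inf :: "nat \<Rightarrow> (nat \<Rightarrow> 'a option set) \<Rightarrow> ('g \<Rightarrow> 'g list \<Rightarrow> nat \<Rightarrow> nat \<Rightarrow> 'a option set)
    \<Rightarrow> (nat \<Rightarrow> 'a option set) \<Rightarrow> 'g \<Rightarrow> nat \<Rightarrow> (nat \<Rightarrow> 'a) set" where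
  "LG_inf n I Mb P p0 l = {w. \<exists>\<alpha> st ws vs s.
       zstart n I p0 (\<alpha> 0) (st 0) \<and>
       (\<forall>m. zprod n Mb (st m) (\<alpha> (Suc m)) (st (Suc m))) \<and>
       (\<forall>m. lderiv (prodX n I Mb P p0) (\<alpha> m) (vs m) (map T (ws m))) \<and>
       concat_inf ws w \<and>
       concat_inf (\<lambda>m. map tfst (vs m) @ [fst (st m)]) s \<and>
       Pl n l s}"

definition LG :: "nat \<Rightarrow> (nat \<Rightarrow> 'a option set) \<Rightarrow> ('g \<Rightarrow> 'g list \<Rightarrow> nat \<Rightarrow> nat \<Rightarrow> 'a option set)
    \<Rightarrow> (nat \<Rightarrow> 'a option set) \<Rightarrow> 'g \<Rightarrow> nat \<Rightarrow> 'a list set \<times> (nat \<Rightarrow> 'a) set" where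
  "LG n I Mb P p0 l = (LG_fin n I Mb P p0, LG_inf n I Mb P p0 l)"

end

theory Submission
  imports Defs "HOL-Library.Infinite_Set"
begin

abbreviation CP :: "(nat \<Rightarrow> 'b list) \<Rightarrow> nat \<Rightarrow> 'b list" where
  "CP u m \<equiv> concat (map u [0..<m])"

lemma sum_len_CP: "(\<Sum>i<m. length (u i)) = length (CP u m)"
  by (induction m) auto

lemma prefix_stake:
  assumes "xs @ zs = map w [0..<K]"
  shows "xs = map w [0..<length xs]"
proof -
  have L: "length xs \<le> K" using arg_cong[OF assms, of length] by simp
  have "xs = take (length xs) (xs @ zs)" by simp
  also have "\<dots> = take (length xs) (map w [0..<K])" by (simp only: assms)
  also have "\<dots> = map w [0..<length xs]"
    using L by (simp add: take_map take_upt)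
  finally show ?thesis .
qed

lemma concat_inf_prefix:
  "concat_inf u w \<longleftrightarrow>
    (\<forall>m. CP u m = map w [0..<length (CP u m)]) \<and> (\<forall>k. \<exists>m. k < length (CP u m))"
proof
  assume A: "concat_inf u w"
  have "CP u m = map w [0..<length (CP u m)]" for m
  proof (induction m)
    case 0 then show ?case by simp
  next
    case (Suc m)
    have pw: "w (length (CP u m) + t) = u m ! t" if "t < length (u m)" for t
      using A that unfolding concat_inf_def sum_len_CP by blast
    have "map w [0..<length (CP u (Suc m))] =
          map w [0..<length (CP u m)] @ map w [length (CP u m)..<length (CP u m) + length (u m)]"
      using upt_add_eq_append[of 0 "length (CP u m)" "length (u m)"] by simp
    also have "map w [length (CP u m)..<length (CP u m) + length (u m)] = u m"
      by (rule nth_equalityI) (auto simp: pw)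
    also note Suc.IH[symmetric]
    finally show ?case by simp
  qed
  then show "(\<forall>m. CP u m = map w [0..<length (CP u m)]) \<and> (\<forall>k. \<exists>m. k < length (CP u m))"
    using A unfolding concat_inf_def sum_len_CP by blast
next
  assume B: "(\<forall>m. CP u m = map w [0..<length (CP u m)]) \<and> (\<forall>k. \<exists>m. k < length (CP u m))"
  have "w (length (CP u m) + t) = u m ! t" if "t < length (u m)" for m t
  proof -
    have "CP u (Suc m) = map w [0..<length (CP u (Suc m))]" using B by blast
    then have "(CP u m @ u m) ! (length (CP u m) + t) = map w [0..<length (CP u m) + length (u m)] ! (length (CP u m) + t)"
      by simp
    then show ?thesis using that by (simp add: nth_append)
  qed
  then show "concat_inf u w" using B unfolding concat_inf_def sum_len_CP by blast
qed

lemma concat_inf_dom1: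
  assumes "concat_inf a w" and d: "\<And>m. \<exists>m' zs. CP b m @ zs = CP a m'" and
     d2: "\<And>m. \<exists>m' zs. CP a m @ zs = CP b m'"
  shows "concat_inf b w"
proof -
    have P0: "(\<forall>m. CP a m = map w [0..<length (CP a m)]) \<and> (\<forall>k. \<exists>m. k < length (CP a m))"
      using concat_inf_prefix[THEN iffD1, OF assms(1)] .
    note P = conjunct1[OF P0] conjunct2[OF P0]
    have c1: "CP b m = map w [0..<length (CP b m)]" for m
    proof -
      obtain m' zs where e: "CP b m @ zs = CP a m'" using d by blast
      have "CP a m' = map w [0..<length (CP a m')]" by (rule spec[OF P(1)])
      then have "CP b m @ zs = map w [0..<length (CP a m')]" unfolding e .
      then show ?thesis by (rule prefix_stake)
    qed
    have c2: "\<exists>m. k < length (CP b m)" for k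
    proof -
      obtain m where "k < length (CP a m)" using P(2) by blast
      moreover obtain m' zs where e: "CP a m @ zs = CP b m'" using d2 by blast
      moreover have "length (CP b m') = length (CP a m) + length zs" by (simp only: e[symmetric] length_append)
      ultimately have "k < length (CP b m')" by linarith
      then show ?thesis by blast
    qed
    have "(\<forall>m. CP b m = map w [0..<length (CP b m)]) \<and> (\<forall>k. \<exists>m. k < length (CP b m))"
      by (intro conjI allI c1 c2)
    then show ?thesis by (rule concat_inf_prefix[THEN iffD2])
qed

lemma concat_inf_dom:
  assumes "\<And>m. \<exists>m' zs. CP u m @ zs = CP v m'"
    and "\<And>m. \<exists>m' zs. CP v m @ zs = CP u m'"
  shows "concat_inf u w \<longleftrightarrow> concat_inf v w"
  using concat_inf_dom1[of u w v] concat_inf_dom1[of v w u] assms by blast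


lemma upt_split: "i \<le> j \<Longrightarrow> j \<le> k \<Longrightarrow> [i..<k] = [i..<j] @ [j..<k]"
  using upt_add_eq_append[of i j "k - j"] by simp

lemma CP_split: "k \<le> K \<Longrightarrow> CP f K = CP f k @ concat (map f [k..<K])"
  using upt_split[of 0 k K] by simp

lemma slices_CP:
  assumes "r 0 = 0" "strict_mono r"
  shows "CP (\<lambda>m. concat (map f [r m..<r (Suc m)])) m = CP f (r m)"
proof (induction m)
  case 0 then show ?case using assms by simp
next
  case (Suc m)
  have le: "r m \<le> r (Suc m)" using assms(2) unfolding strict_mono_def by (simp add: less_imp_le)
  have "CP (\<lambda>m. concat (map f [r m..<r (Suc m)])) (Suc m) =
        CP (\<lambda>m. concat (map f [r m..<r (Suc m)])) m @ concat (map f [r m..<r (Suc m)])" by simp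
  also have "\<dots> = CP f (r m) @ concat (map f [r m..<r (Suc m)])" by (simp only: Suc.IH)
  also have "\<dots> = CP f (r (Suc m))" using CP_split[OF le, of f] by simp
  finally show ?case .
qed

lemma slices:
  assumes "r 0 = 0" "strict_mono r"
  shows "concat_inf f w \<longleftrightarrow> concat_inf (\<lambda>m. concat (map f [r m..<r (Suc m)])) w"
proof (rule concat_inf_dom)
  fix m
  have "m \<le> r m" using assms(2) by (simp add: strict_mono_imp_increasing)
  then have "CP f m @ concat (map f [m..<r m]) = CP (\<lambda>m. concat (map f [r m..<r (Suc m)])) m"
    using CP_split[of m "r m" f] slices_CP[OF assms, of f m] by simp
  then show "\<exists>m' zs. CP f m @ zs = CP (\<lambda>m. concat (map f [r m..<r (Suc m)])) m'" by blast
next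
  fix m
  show "\<exists>m' zs. CP (\<lambda>m. concat (map f [r m..<r (Suc m)])) m @ zs = CP f m'"
    using slices_CP[OF assms, of f m] by (metis append_Nil2)
qed

lemma concat_inf_exists:
  assumes ne: "\<And>m. u m \<noteq> []"
  shows "\<exists>w. concat_inf u w"
proof -
  define R where "R m = (\<Sum>i<m. length (u i))" for m
  have RS: "R (Suc m) = R m + length (u m)" for m by (simp add: R_def)
  have Rmono: "R a \<le> R b" if "a \<le> b" for a b
    using that by (induction b) (auto simp: RS le_Suc_eq)
  have Rge: "m \<le> R m" for m
  proof (induction m)
    case (Suc m) then show ?case using ne[of m] by (cases "u m") (auto simp: RS)
  qed simp
  define idx where "idx t = (LEAST m. t < R (Suc m))" for t
  define w where "w t = u (idx t) ! (t - R (idx t))" for t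
  have idx: "idx (R m + t) = m" if "t < length (u m)" for m t
    unfolding idx_def
  proof (rule Least_equality)
    show "R m + t < R (Suc m)" using that RS by simp
  next
    fix y assume "R m + t < R (Suc y)"
    show "m \<le> y"
    proof (rule ccontr)
      assume "\<not> m \<le> y"
      then have "Suc y \<le> m" by simp
      then have "R (Suc y) \<le> R m" by (rule Rmono)
      with \<open>R m + t < R (Suc y)\<close> show False by simp
    qed
  qed
  have "concat_inf u w"
    unfolding concat_inf_def
  proof (intro conjI allI impI)
    fix k show "\<exists>m. k < (\<Sum>i<m. length (u i))"
      using Rge[of "Suc k"] unfolding R_def by (intro exI[of _ "Suc k"]) simp
  next
    fix m t assume "t < length (u m)"
    then show "w ((\<Sum>i<m. length (u i)) + t) = u m ! t"
      using idx[of t m] unfolding w_def R_def[symmetric] by simp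
  qed
  then show ?thesis by blast
qed

lemma concat_inf_cons:
  "concat_inf (case_nat x u) W \<longleftrightarrow>
    (\<forall>t<length x. W t = x ! t) \<and> concat_inf u (\<lambda>t. W (t + length x))"
proof -
  have S: "(\<Sum>i<Suc m. length (case_nat x u i)) = length x + (\<Sum>i<m. length (u i))" for m
    by (simp only: sum.lessThan_Suc_shift) simp
  have A: "(\<forall>k. \<exists>m. k < (\<Sum>i<m. length (case_nat x u i))) \<longleftrightarrow> (\<forall>k. \<exists>m. k < (\<Sum>i<m. length (u i)))"
  proof
    assume a: "\<forall>k. \<exists>m. k < (\<Sum>i<m. length (case_nat x u i))"
    show "\<forall>k. \<exists>m. k < (\<Sum>i<m. length (u i))"
    proof
      fix k obtain m where m: "k + length x < (\<Sum>i<m. length (case_nat x u i))" using a by blast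
      show "\<exists>m. k < (\<Sum>i<m. length (u i))"
      proof (cases m)
        case 0 then show ?thesis using m by simp
      next
        case (Suc m') then show ?thesis using m S[of m'] by (intro exI[of _ m']) simp
      qed
    qed
  next
    assume a: "\<forall>k. \<exists>m. k < (\<Sum>i<m. length (u i))"
    show "\<forall>k. \<exists>m. k < (\<Sum>i<m. length (case_nat x u i))"
    proof
      fix k obtain m where m: "k < (\<Sum>i<m. length (u i))" using a by blast
      then show "\<exists>m. k < (\<Sum>i<m. length (case_nat x u i))" using S[of m] by (intro exI[of _ "Suc m"]) simp
    qed
  qed
  have B: "(\<forall>m t. t < length (case_nat x u m) \<longrightarrow> W ((\<Sum>i<m. length (case_nat x u i)) + t) = case_nat x u m ! t)
     \<longleftrightarrow> (\<forall>t<length x. W t = x ! t) \<and>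
         (\<forall>m t. t < length (u m) \<longrightarrow> W ((\<Sum>i<m. length (u i)) + t + length x) = u m ! t)"
  proof (intro iffI conjI allI impI)
    fix t assume a: "\<forall>m t. t < length (case_nat x u m) \<longrightarrow> W ((\<Sum>i<m. length (case_nat x u i)) + t) = case_nat x u m ! t"
      and "t < length x"
    then show "W t = x ! t" using spec[OF spec[OF a, of 0], of t] by simp
  next
    fix m t assume a: "\<forall>m t. t < length (case_nat x u m) \<longrightarrow> W ((\<Sum>i<m. length (case_nat x u i)) + t) = case_nat x u m ! t"
      and "t < length (u m)"
    then show "W ((\<Sum>i<m. length (u i)) + t + length x) = u m ! t"
      using spec[OF spec[OF a, of "Suc m"], of t] S[of m] by (simp add: add.commute add.left_commute)
  next
    fix m t assume a: "(\<forall>t<length x. W t = x ! t) \<and>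
         (\<forall>m t. t < length (u m) \<longrightarrow> W ((\<Sum>i<m. length (u i)) + t + length x) = u m ! t)"
      and t: "t < length (case_nat x u m)"
    show "W ((\<Sum>i<m. length (case_nat x u i)) + t) = case_nat x u m ! t"
    proof (cases m)
      case 0 then show ?thesis using a t by simp
    next
      case (Suc m') then show ?thesis using a t S[of m'] by (simp add: add.commute add.left_commute)
    qed
  qed
  show ?thesis unfolding concat_inf_def A B by blast
qed

lemma concat_inf_single: "concat_inf (\<lambda>t. [x t]) s \<longleftrightarrow> s = x"
  unfolding concat_inf_def by (auto intro!: exI[of _ "Suc _"])

lemma Pl_shift: "Pl n l s \<longleftrightarrow> s 0 \<in> {1..n} \<and> Pl n l (\<lambda>t. s (Suc t))"
proof -
  have "infinite {t. s t \<le> l} \<longleftrightarrow> infinite {t. s (Suc t) \<le> l}"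
    unfolding infinite_nat_iff_unbounded
  proof (intro iffI allI)
    fix m assume a: "\<forall>m. \<exists>n>m. n \<in> {t. s t \<le> l}"
    obtain k where "k > Suc m" "s k \<le> l" using a by blast
    then show "\<exists>n>m. n \<in> {t. s (Suc t) \<le> l}" by (intro exI[of _ "k - 1"]) auto
  next
    fix m assume a: "\<forall>m. \<exists>n>m. n \<in> {t. s (Suc t) \<le> l}"
    obtain k where "k > m" "s (Suc k) \<le> l" using a by blast
    then show "\<exists>n>m. n \<in> {t. s t \<le> l}" by (intro exI[of _ "Suc k"]) auto
  qed
  moreover have "(\<forall>t. s t \<in> {1..n}) \<longleftrightarrow> s 0 \<in> {1..n} \<and> (\<forall>t. s (Suc t) \<in> {1..n})"
    by (metis not0_implies_Suc)
  ultimately show ?thesis unfolding Pl_def by blast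
qed

lemma successively_nth:
  "successively P xs \<Longrightarrow> Suc i < length xs \<Longrightarrow> P (xs ! i) (xs ! Suc i)"
proof (induction xs arbitrary: i)
  case Nil then show ?case by simp
next
  case (Cons x xs)
  then show ?case
    by (cases i) (auto simp: successively_Cons neq_Nil_conv)
qed


inductive run :: "nat \<Rightarrow> ('g \<Rightarrow> 'g list \<Rightarrow> nat \<Rightarrow> nat \<Rightarrow> 'a option set) \<Rightarrow> 'g list \<Rightarrow> nat \<Rightarrow> 'a list \<Rightarrow> nat list \<Rightarrow> 'g list \<Rightarrow> nat \<Rightarrow> bool"
  for n Mb where
  rnil: "run n Mb \<pi> i [] [] \<pi> i"
| rstep: "a \<in> Mb p \<gamma> i k \<Longrightarrow> k \<in> {1..n} \<Longrightarrow> run n Mb (\<gamma> @ \<pi>') k w ss \<pi>2 j \<Longrightarrow>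
          run n Mb (p # \<pi>') i (oword a @ w) (i # ss) \<pi>2 j"

lemma run_append: "run n Mb \<pi> i w ss \<pi>2 j \<Longrightarrow> run n Mb (\<pi> @ \<beta>) i w ss (\<pi>2 @ \<beta>) j"
proof (induction rule: run.induct)
  case (rnil \<pi> i) then show ?case by (rule run.rnil)
next
  case (rstep a p \<gamma> i k \<pi>' w ss \<pi>2 j)
  have "run n Mb (\<gamma> @ (\<pi>' @ \<beta>)) k w ss (\<pi>2 @ \<beta>) j" using rstep.IH by simp
  from run.rstep[where n=n and Mb=Mb, OF rstep.hyps(1,2) this] show ?case by simp
qed

lemma run_trans: "run n Mb \<pi>1 i w1 ss1 \<pi>2 j \<Longrightarrow> run n Mb \<pi>2 j w2 ss2 \<pi>3 k \<Longrightarrow>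
   run n Mb \<pi>1 i (w1 @ w2) (ss1 @ ss2) \<pi>3 k"
proof (induction rule: run.induct)
  case (rnil \<pi> i) then show ?case by simp
next
  case (rstep a p \<gamma> i k' \<pi>' w ss \<pi>2 j)
  have "run n Mb (\<gamma> @ \<pi>') k' (w @ w2) (ss @ ss2) \<pi>3 k" using rstep.IH rstep.prems by simp
  from run.rstep[where n=n and Mb=Mb, OF rstep.hyps(1,2) this] show ?case by simp
qed

lemma run_nil_stack: "run n Mb [] i w ss \<pi>2 j \<Longrightarrow> w = [] \<and> ss = [] \<and> \<pi>2 = [] \<and> j = i"
  by (erule run.cases) auto

lemma run_empty_ss: "run n Mb \<pi> i w [] \<pi>2 j \<Longrightarrow> w = [] \<and> \<pi>2 = \<pi> \<and> j = i"
  by (erule run.cases) auto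

lemma run_states: "run n Mb \<pi> i w ss \<pi>2 j \<Longrightarrow> i \<in> {1..n} \<Longrightarrow> j \<in> {1..n}"
  by (induction rule: run.induct) auto

lemma run_split_aux:
  "run n Mb \<pi> i w ss \<pi>2 j \<Longrightarrow> \<pi> = \<alpha> @ \<beta> \<Longrightarrow> \<pi>2 = [] \<Longrightarrow>
   \<exists>m w1 w2 ss1 ss2. run n Mb \<alpha> i w1 ss1 [] m \<and> run n Mb \<beta> m w2 ss2 [] j \<and> w = w1 @ w2 \<and> ss = ss1 @ ss2"
proof (induction arbitrary: \<alpha> rule: run.induct)
  case (rnil \<pi> i)
  then show ?case by (intro exI[of _ i] exI[of _ "[]"]) (auto intro: run.rnil)
next
  case (rstep a p \<gamma> i k \<pi>' w ss \<pi>2 j)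
  show ?case
  proof (cases \<alpha>)
    case Nil
    then show ?thesis using rstep.prems run.rstep[where n=n and Mb=Mb, OF rstep.hyps(1,2,3)]
      by (intro exI[of _ i] exI[of _ "[]"] exI[of _ "oword a @ w"] exI[of _ "[]"] exI[of _ "i # ss"]) (auto intro: run.rnil)
  next
    case (Cons p' \<alpha>')
    then have pp: "p' = p" "\<pi>' = \<alpha>' @ \<beta>" using rstep.prems by auto
    obtain m w1 w2 ss1 ss2 where o: "run n Mb (\<gamma> @ \<alpha>') k w1 ss1 [] m" "run n Mb \<beta> m w2 ss2 [] j"
       "w = w1 @ w2" "ss = ss1 @ ss2"
      using rstep.IH[of "\<gamma> @ \<alpha>'"] pp rstep.prems by auto
    have "run n Mb (p # \<alpha>') i (oword a @ w1) (i # ss1) [] m"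
      by (rule run.rstep[where n=n and Mb=Mb, OF rstep.hyps(1,2) o(1)])
    then show ?thesis using o Cons pp
      by (intro exI[of _ m] exI[of _ "oword a @ w1"] exI[of _ w2] exI[of _ "i # ss1"] exI[of _ ss2]) auto
  qed
qed

lemma run_split: "run n Mb (\<alpha> @ \<beta>) i w ss [] j \<Longrightarrow>
   \<exists>m w1 w2 ss1 ss2. run n Mb \<alpha> i w1 ss1 [] m \<and> run n Mb \<beta> m w2 ss2 [] j \<and> w = w1 @ w2 \<and> ss = ss1 @ ss2"
  using run_split_aux by blast

lemma Mpow_run: "u \<in> Mpow n Mb m \<pi>1 \<pi>2 i j \<longleftrightarrow> (\<exists>ss. run n Mb \<pi>1 i u ss \<pi>2 j \<and> length ss = m)"
proof (induction m arbitrary: \<pi>1 i u)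
  case 0
  show ?case
  proof
    assume "u \<in> Mpow n Mb 0 \<pi>1 \<pi>2 i j"
    then show "\<exists>ss. run n Mb \<pi>1 i u ss \<pi>2 j \<and> length ss = 0"
      by (auto split: if_splits intro: run.rnil)
  next
    assume "\<exists>ss. run n Mb \<pi>1 i u ss \<pi>2 j \<and> length ss = 0"
    then show "u \<in> Mpow n Mb 0 \<pi>1 \<pi>2 i j" using run_empty_ss by fastforce
  qed
next
  case (Suc m)
  show ?case
  proof
    assume "u \<in> Mpow n Mb (Suc m) \<pi>1 \<pi>2 i j"
    then obtain a w \<pi> k p \<pi>0 \<pi>' where o: "u = oword a @ w" "k \<in> {1..n}" "\<pi>1 = p # \<pi>'" "\<pi> = \<pi>0 @ \<pi>'"
      "a \<in> Mb p \<pi>0 i k" "w \<in> Mpow n Mb m \<pi> \<pi>2 k j"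
      by (auto simp: Mblock_def)
    then obtain ss where "run n Mb \<pi> k w ss \<pi>2 j" "length ss = m" using Suc.IH by blast
    then show "\<exists>ss. run n Mb \<pi>1 i u ss \<pi>2 j \<and> length ss = Suc m"
      using run.rstep[where n=n and Mb=Mb, OF o(5) o(2), of \<pi>' w ss \<pi>2 j] o by (intro exI[of _ "i # ss"]) auto
  next
    assume "\<exists>ss. run n Mb \<pi>1 i u ss \<pi>2 j \<and> length ss = Suc m"
    then obtain ss where r: "run n Mb \<pi>1 i u ss \<pi>2 j" "length ss = Suc m" by blast
    from r(1) show "u \<in> Mpow n Mb (Suc m) \<pi>1 \<pi>2 i j"
    proof (cases rule: run.cases)
      case rnil then show ?thesis using r(2) by simp
    next
      case (rstep a p \<gamma> k \<pi>' w ss')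
      then have "w \<in> Mpow n Mb m (\<gamma> @ \<pi>') \<pi>2 k j" using Suc.IH r(2) by auto
      moreover have "a \<in> Mblock Mb \<pi>1 (\<gamma> @ \<pi>') i k" using rstep by (auto simp: Mblock_def)
      ultimately show ?thesis using rstep by auto
    qed
  qed
qed

lemma Mstar_run: "u \<in> Mstar n Mb \<pi>1 \<pi>2 i j \<longleftrightarrow> (\<exists>ss. run n Mb \<pi>1 i u ss \<pi>2 j)"
  unfolding Mstar_def using Mpow_run by blast


inductive dv :: "('g xvar \<Rightarrow> ('a, 'g) gsym list \<Rightarrow> bool) \<Rightarrow> ('a, 'g) gsym list \<Rightarrow> 'g xvar list \<Rightarrow> 'a list \<Rightarrow> bool"
  for R where
  dv_nil: "dv R [] [] []"
| dv_T: "dv R xs vs w \<Longrightarrow> dv R (T a # xs) vs (a # w)"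
| dv_N: "R A \<gamma> \<Longrightarrow> dv R (\<gamma> @ xs) vs w \<Longrightarrow> dv R (N A # xs) (A # vs) w"

inductive_cases dv_nilE: "dv R [] vs w"
inductive_cases dv_TE: "dv R (T a # xs) vs w"
inductive_cases dv_NE: "dv R (N A # xs) vs w"

lemma dv_T_iff: "dv R (T a # xs) vs w \<longleftrightarrow> (\<exists>w'. w = a # w' \<and> dv R xs vs w')"
  by (auto elim: dv_TE intro: dv_T)

lemma dv_nil_iff: "dv R [] vs w \<longleftrightarrow> vs = [] \<and> w = []"
  by (auto elim: dv_nilE intro: dv_nil)

lemma dv_mapT: "dv R (map T u @ \<beta>) vs w \<longleftrightarrow> (\<exists>w'. w = u @ w' \<and> dv R \<beta> vs w')"
  by (induction u arbitrary: w) (auto simp: dv_T_iff)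

lemma lderiv_prefix: "lderiv R \<beta> vs \<delta> \<Longrightarrow> lderiv R (map T u @ \<beta>) vs (map T u @ \<delta>)"
proof (induction rule: lderiv.induct)
  case (ld_refl \<alpha>) then show ?case by (rule lderiv.ld_refl)
next
  case (ld_step A \<gamma> u' \<beta> vs \<delta>)
  then have "lderiv R (map T (u @ u') @ \<gamma> @ \<beta>) vs (map T u @ \<delta>)" by simp
  from lderiv.ld_step[OF ld_step.hyps(1) this] show ?case by simp
qed

lemma lderiv_dv1: "lderiv R \<alpha> vs \<delta> \<Longrightarrow> \<delta> = map T w \<Longrightarrow> dv R \<alpha> vs w"
proof (induction arbitrary: w rule: lderiv.induct)
  case (ld_refl \<alpha>)
  have "dv R (map T w @ []) [] w"
    by (subst dv_mapT) (intro exI[of _ "[]"] conjI dv_nil; simp)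
  then show ?case using ld_refl by simp
next
  case (ld_step A \<gamma> u \<beta> vs \<delta>)
  then have "dv R (map T u @ \<gamma> @ \<beta>) vs w" by blast
  then obtain w' where w': "w = u @ w'" "dv R (\<gamma> @ \<beta>) vs w'" by (subst (asm) dv_mapT) blast
  then have "dv R (N A # \<beta>) (A # vs) w'" by (intro dv_N[where R=R, OF ld_step.hyps(1)])
  then show ?case using w'(1) by (subst dv_mapT) blast
qed

lemma dv_lderiv: "dv R \<alpha> vs w \<Longrightarrow> lderiv R \<alpha> vs (map T w)"
proof (induction rule: dv.induct)
  case dv_nil then show ?case using lderiv.ld_refl[of R "[]"] by simp
next
  case (dv_T xs vs w a)
  then show ?case using lderiv_prefix[OF dv_T.IH, of "[a]"] by simp
next
  case (dv_N A \<gamma> xs vs w)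
  then show ?case using lderiv.ld_step[of R A \<gamma> "[]" xs vs] by simp
qed

lemma lderiv_dv: "lderiv R \<alpha> vs (map T w) \<longleftrightarrow> dv R \<alpha> vs w"
  using lderiv_dv1[OF _ refl] dv_lderiv by (rule iffI)

lemma dv_append1: "dv R \<alpha> vs1 w1 \<Longrightarrow> dv R \<beta> vs2 w2 \<Longrightarrow> dv R (\<alpha> @ \<beta>) (vs1 @ vs2) (w1 @ w2)"
proof (induction rule: dv.induct)
  case dv_nil then show ?case by simp
next
  case (dv_T xs vs w a) then show ?case by (simp add: dv.dv_T)
next
  case (dv_N A \<gamma> xs vs w) then show ?case using dv.dv_N[of R A \<gamma> "xs @ \<beta>"] by simp
qed

lemma dv_append2: "dv R x vs w \<Longrightarrow> x = \<alpha> @ \<beta> \<Longrightarrow>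
   \<exists>vs1 vs2 w1 w2. vs = vs1 @ vs2 \<and> w = w1 @ w2 \<and> dv R \<alpha> vs1 w1 \<and> dv R \<beta> vs2 w2"
proof (induction arbitrary: \<alpha> rule: dv.induct)
  case dv_nil then show ?case by (auto intro: dv.dv_nil)
next
  case (dv_T xs vs w a)
  show ?case
  proof (cases \<alpha>)
    case Nil then show ?thesis using dv_T dv.dv_T[OF dv_T.hyps]
      by (intro exI[of _ "[]"] exI[of _ vs] exI[of _ "[]"] exI[of _ "a # w"]) (auto intro: dv.dv_nil)
  next
    case (Cons x \<alpha>')
    then have "x = T a" "xs = \<alpha>' @ \<beta>" using dv_T.prems by auto
    then obtain vs1 vs2 w1 w2 where "vs = vs1 @ vs2" "w = w1 @ w2" "dv R \<alpha>' vs1 w1" "dv R \<beta> vs2 w2"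
      using dv_T.IH by blast
    then show ?thesis using Cons \<open>x = T a\<close>
      by (intro exI[of _ vs1] exI[of _ vs2] exI[of _ "a # w1"] exI[of _ w2]) (auto intro: dv.dv_T)
  qed
next
  case (dv_N A \<gamma> xs vs w)
  show ?case
  proof (cases \<alpha>)
    case Nil then show ?thesis using dv_N dv.dv_N[where R=R, OF dv_N.hyps(1,2)]
      by (intro exI[of _ "[]"] exI[of _ "A # vs"] exI[of _ "[]"] exI[of _ w]) (auto intro: dv.dv_nil)
  next
    case (Cons x \<alpha>')
    then have "x = N A" "xs = \<alpha>' @ \<beta>" using dv_N.prems by auto
    then obtain vs1 vs2 w1 w2 where "vs = vs1 @ vs2" "w = w1 @ w2" "dv R (\<gamma> @ \<alpha>') vs1 w1" "dv R \<beta> vs2 w2"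
      using dv_N.IH[of "\<gamma> @ \<alpha>'"] by auto
    then show ?thesis using Cons \<open>x = N A\<close> dv_N.hyps(1)
      by (intro exI[of _ "A # vs1"] exI[of _ vs2] exI[of _ w1] exI[of _ w2]) (auto intro: dv.dv_N)
  qed
qed

lemma dv_append: "dv R (\<alpha> @ \<beta>) vs w \<longleftrightarrow>
   (\<exists>vs1 vs2 w1 w2. vs = vs1 @ vs2 \<and> w = w1 @ w2 \<and> dv R \<alpha> vs1 w1 \<and> dv R \<beta> vs2 w2)"
proof
  assume "dv R (\<alpha> @ \<beta>) vs w" then show "\<exists>vs1 vs2 w1 w2. vs = vs1 @ vs2 \<and> w = w1 @ w2 \<and> dv R \<alpha> vs1 w1 \<and> dv R \<beta> vs2 w2"
    by (rule dv_append2[OF _ refl])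
next
  assume "\<exists>vs1 vs2 w1 w2. vs = vs1 @ vs2 \<and> w = w1 @ w2 \<and> dv R \<alpha> vs1 w1 \<and> dv R \<beta> vs2 w2"
  then obtain vs1 vs2 w1 w2 where "vs = vs1 @ vs2" "w = w1 @ w2" "dv R \<alpha> vs1 w1" "dv R \<beta> vs2 w2" by blast
  then show "dv R (\<alpha> @ \<beta>) vs w" using dv_append1 by simp
qed

lemma dv_single: "dv R [N A] vs w \<longleftrightarrow> (\<exists>\<gamma> vs'. vs = A # vs' \<and> R A \<gamma> \<and> dv R \<gamma> vs' w)"
  by (auto elim!: dv_NE intro: dv_N[of R A _ "[]", simplified])


lemma dv_mapT_only: "dv R (map T u) vs w \<longleftrightarrow> vs = [] \<and> w = u"
  using dv_mapT[of R u "[]" vs w] by (simp add: dv_nil_iff conj_commute)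

lemma prodX_Trip: "prodX n I Mb P p0 (Trip i p j) \<gamma> \<longleftrightarrow> i \<in> {1..n} \<and> j \<in> {1..n} \<and>
        (\<exists>a ps ms. length ms = length ps \<and> set ms \<subseteq> {1..n} \<and>
           a \<in> Mb p ps i (case ms of [] \<Rightarrow> j | m1 # _ \<Rightarrow> m1) \<and>
           \<gamma> = osym a @ map N (chain ms ps j))"
  unfolding prodX_def by simp

lemma prodX_X0: "prodX n I Mb P p0 X0 \<gamma> \<longleftrightarrow> (\<exists>m1 m2 a1 a2. m1 \<in> {1..n} \<and> m2 \<in> {1..n} \<and> a1 \<in> I m1 \<and> a2 \<in> P m2 \<and>
                 \<gamma> = osym a1 @ [N (Trip m1 p0 m2)] @ osym a2)"
  unfolding prodX_def by simp

lemma chain_run: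
  "dv (prodX n I Mb P p0) (map N (chain ms ps j)) vs w \<Longrightarrow> length ms = length ps \<Longrightarrow>
   set ms \<subseteq> {1..n} \<Longrightarrow> j \<in> {1..n} \<Longrightarrow>
   run n Mb ps (case ms of [] \<Rightarrow> j | m # _ \<Rightarrow> m) w (map tfst vs) [] j"
proof (induction "length vs" arbitrary: ms ps j vs w rule: less_induct)
  case less
  show ?case
  proof (cases ms)
    case Nil
    then have "ps = []" using less.prems(2) by simp
    then have "vs = []" "w = []" using less.prems(1) Nil by (auto simp: dv_nil_iff)
    then show ?thesis using Nil \<open>ps = []\<close> by (simp add: run.rnil)
  next
    case (Cons m ms')
    then obtain p ps' where ps: "ps = p # ps'" using less.prems(2) by (cases ps) auto
    define m2 where "m2 = (case ms' of [] \<Rightarrow> j | m' # _ \<Rightarrow> m')"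
    have m2n: "m2 \<in> {1..n}" using less.prems(3,4) Cons unfolding m2_def by (cases ms') auto
    have "map N (chain ms ps j) = [N (Trip m p m2)] @ map N (chain ms' ps' j)"
      using Cons ps m2_def by simp
    then obtain vs1 vs2 w1 w2 where s: "vs = vs1 @ vs2" "w = w1 @ w2"
       "dv (prodX n I Mb P p0) [N (Trip m p m2)] vs1 w1" "dv (prodX n I Mb P p0) (map N (chain ms' ps' j)) vs2 w2"
      using less.prems(1) dv_append by metis
    from s(3) obtain \<gamma> vs1' where g: "vs1 = Trip m p m2 # vs1'" "prodX n I Mb P p0 (Trip m p m2) \<gamma>"
       "dv (prodX n I Mb P p0) \<gamma> vs1' w1" by (auto simp: dv_single)
    from g(2) obtain a ps'' ms'' where pr: "length ms'' = length ps''" "set ms'' \<subseteq> {1..n}"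
       "a \<in> Mb p ps'' m (case ms'' of [] \<Rightarrow> m2 | m1 # _ \<Rightarrow> m1)" "\<gamma> = osym a @ map N (chain ms'' ps'' m2)"
      by (auto simp: prodX_Trip)
    from g(3) pr(4) obtain w1' where w1: "w1 = oword a @ w1'" "dv (prodX n I Mb P p0) (map N (chain ms'' ps'' m2)) vs1' w1'"
      unfolding osym_def by (auto simp: dv_mapT)
    have r1: "run n Mb ps'' (case ms'' of [] \<Rightarrow> m2 | m1 # _ \<Rightarrow> m1) w1' (map tfst vs1') [] m2"
      using less.hyps[of vs1' ms'' ps'' m2 w1'] s(1) g(1) w1(2) pr(1,2) m2n by simp
    have kn: "(case ms'' of [] \<Rightarrow> m2 | m1 # _ \<Rightarrow> m1) \<in> {1..n}" using m2n pr(2) by (cases ms'') auto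
    have "run n Mb (p # []) m (oword a @ w1') (m # map tfst vs1') [] m2"
      using run.rstep[where n=n and Mb=Mb, OF pr(3) kn, of "[]"] r1 by simp
    from run_append[OF this, of ps'] have r1': "run n Mb ps m w1 (m # map tfst vs1') ps' m2"
      using ps w1(1) by simp
    have r2: "run n Mb ps' m2 w2 (map tfst vs2) [] j"
      using less.hyps[of vs2 ms' ps' j w2] s(1) g(1) s(4) less.prems Cons ps m2_def by simp
    show ?thesis using run_trans[OF r1' r2] s g(1) Cons by simp
  qed
qed

lemma run_chain:
  "run n Mb ps i w ss [] j \<Longrightarrow> i \<in> {1..n} \<Longrightarrow> j \<in> {1..n} \<Longrightarrow>
   \<exists>ms vs. length ms = length ps \<and> set ms \<subseteq> {1..n} \<and> (case ms of [] \<Rightarrow> j | m # _ \<Rightarrow> m) = i \<and>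
      dv (prodX n I Mb P p0) (map N (chain ms ps j)) vs w \<and> map tfst vs = ss"
proof (induction "length ss" arbitrary: ps i w ss j rule: less_induct)
  case less
  show ?case
  proof (cases ps)
    case Nil
    then have "w = [] \<and> ss = [] \<and> j = i" using run_nil_stack less.prems(1) by fastforce
    then show ?thesis using Nil
      by (intro exI[of _ "[]"]) (auto simp: dv_nil_iff)
  next
    case (Cons p ps')
    from less.prems(1) Cons obtain m w1 w2 ss1 ss2 where sp: "run n Mb [p] i w1 ss1 [] m"
      "run n Mb ps' m w2 ss2 [] j" "w = w1 @ w2" "ss = ss1 @ ss2"
      using run_split[of n Mb "[p]" ps' i w ss j] by auto
    from sp(1) obtain a \<gamma> k w1' ss1' where st: "a \<in> Mb p \<gamma> i k" "k \<in> {1..n}"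
      "run n Mb \<gamma> k w1' ss1' [] m" "w1 = oword a @ w1'" "ss1 = i # ss1'"
      by (cases rule: run.cases) auto
    have mn: "m \<in> {1..n}" using run_states[OF st(3) st(2)] .
    obtain ms'' vs1' where h1: "length ms'' = length \<gamma>" "set ms'' \<subseteq> {1..n}"
      "(case ms'' of [] \<Rightarrow> m | m' # _ \<Rightarrow> m') = k" "dv (prodX n I Mb P p0) (map N (chain ms'' \<gamma> m)) vs1' w1'"
      "map tfst vs1' = ss1'"
      using less.hyps[of ss1' \<gamma> k w1' m] st sp(4) mn by auto
    obtain ms' vs2 where h2: "length ms' = length ps'" "set ms' \<subseteq> {1..n}"
      "(case ms' of [] \<Rightarrow> j | m' # _ \<Rightarrow> m') = m" "dv (prodX n I Mb P p0) (map N (chain ms' ps' j)) vs2 w2"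
      "map tfst vs2 = ss2"
      using less.hyps[of ss2 ps' m w2 j] st sp mn less.prems(3) by auto
    have pr: "prodX n I Mb P p0 (Trip i p m) (osym a @ map N (chain ms'' \<gamma> m))"
      unfolding prodX_Trip using less.prems(2) mn h1 st(1) by blast
    have "dv (prodX n I Mb P p0) (osym a @ map N (chain ms'' \<gamma> m)) vs1' w1"
      unfolding osym_def dv_mapT using st(4) h1(4) by blast
    then have d1: "dv (prodX n I Mb P p0) [N (Trip i p m)] (Trip i p m # vs1') w1"
      using pr by (auto simp: dv_single)
    have "dv (prodX n I Mb P p0) ([N (Trip i p m)] @ map N (chain ms' ps' j)) ((Trip i p m # vs1') @ vs2) (w1 @ w2)"
      using dv_append1[OF d1 h2(4)] .
    moreover have "map N (chain (i # ms') ps j) = [N (Trip i p m)] @ map N (chain ms' ps' j)"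
      using Cons h2(3) by simp
    ultimately show ?thesis using h1 h2 Cons sp st less.prems(2)
      by (intro exI[of _ "i # ms'"] exI[of _ "(Trip i p m # vs1') @ vs2"]) auto
  qed
qed

lemma LG_fin_eq: "LG_fin n I Mb P p0 = sigma_x0 n I Mb P p0"
proof (intro set_eqI iffI)
  fix w assume "w \<in> LG_fin n I Mb P p0"
  then obtain vs where "dv (prodX n I Mb P p0) [N X0] vs w" unfolding LG_fin_def by (auto simp: lderiv_dv)
  then obtain \<gamma> vs' where g: "prodX n I Mb P p0 X0 \<gamma>" "dv (prodX n I Mb P p0) \<gamma> vs' w"
    by (auto simp: dv_single)
  from g(1) obtain m1 m2 a1 a2 where x: "m1 \<in> {1..n}" "m2 \<in> {1..n}" "a1 \<in> I m1" "a2 \<in> P m2"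
     "\<gamma> = osym a1 @ [N (Trip m1 p0 m2)] @ osym a2" by (auto simp: prodX_X0)
  from g(2) x(5) obtain w' where a: "w = oword a1 @ w'" "dv (prodX n I Mb P p0) ([N (Trip m1 p0 m2)] @ map T (oword a2)) vs' w'"
    unfolding osym_def by (auto simp: dv_mapT)
  from a(2) obtain vs1 vs2 w1 w2 where b: "vs' = vs1 @ vs2" "w' = w1 @ w2"
     "dv (prodX n I Mb P p0) [N (Trip m1 p0 m2)] vs1 w1" "dv (prodX n I Mb P p0) (map T (oword a2)) vs2 w2"
    using dv_append by metis
  have c: "w2 = oword a2" using b(4) by (simp add: dv_mapT_only)
  have "run n Mb [p0] m1 w1 (map tfst vs1) [] m2"
    using chain_run[of n I Mb P p0 "[m1]" "[p0]" m2 vs1 w1] b(3) x by simp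
  then show "w \<in> sigma_x0 n I Mb P p0" unfolding sigma_x0_def Mstar_run using x a(1) b(2) c by blast
next
  fix w assume "w \<in> sigma_x0 n I Mb P p0"
  then obtain a1 u a2 i j ss where x: "w = oword a1 @ u @ oword a2" "i \<in> {1..n}" "j \<in> {1..n}" "a1 \<in> I i"
    "run n Mb [p0] i u ss [] j" "a2 \<in> P j"
    unfolding sigma_x0_def Mstar_run by blast
  obtain ms vs where c: "length ms = 1" "set ms \<subseteq> {1..n}" "(case ms of [] \<Rightarrow> j | m # _ \<Rightarrow> m) = i"
    "dv (prodX n I Mb P p0) (map N (chain ms [p0] j)) vs u"
    using run_chain[OF x(5) x(2) x(3), of I P p0] by auto
  then have "ms = [i]" by (cases ms) auto
  with c(4) have d: "dv (prodX n I Mb P p0) [N (Trip i p0 j)] vs u" by simp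
  have "dv (prodX n I Mb P p0) (map T (oword a2)) [] (oword a2)"
    by (simp add: dv_mapT_only)
  from dv_append1[OF d this] have "dv (prodX n I Mb P p0) ([N (Trip i p0 j)] @ map T (oword a2)) vs (u @ oword a2)"
    by simp
  then have "dv (prodX n I Mb P p0) (osym a1 @ [N (Trip i p0 j)] @ osym a2) vs w"
    unfolding osym_def dv_mapT using x(1) by auto
  moreover have "prodX n I Mb P p0 X0 (osym a1 @ [N (Trip i p0 j)] @ osym a2)"
    unfolding prodX_X0 using x by blast
  ultimately have "dv (prodX n I Mb P p0) [N X0] (X0 # vs) w" by (auto simp: dv_single)
  then show "w \<in> LG_fin n I Mb P p0" unfolding LG_fin_def by (auto simp: lderiv_dv)
qed


definition stepok :: "nat \<Rightarrow> ('g \<Rightarrow> 'g list \<Rightarrow> nat \<Rightarrow> nat \<Rightarrow> 'a option set) \<Rightarrow>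
    'g list \<times> nat \<times> 'a option \<Rightarrow> 'g list \<times> nat \<times> 'a option \<Rightarrow> bool" where
  "stepok n Mb c c' \<longleftrightarrow> snd (snd c) \<in> Mblock Mb (fst c) (fst c') (fst (snd c)) (fst (snd c')) \<and>
      fst (snd c') \<in> {1..n}"

lemma run_list:
  "run n Mb \<pi> i w ss \<pi>2 j \<Longrightarrow> \<exists>cs. length cs = length ss \<and> map (fst \<circ> snd) cs = ss \<and>
     concat (map (oword \<circ> snd \<circ> snd) cs) = w \<and> successively (stepok n Mb) (cs @ [(\<pi>2, j, None)]) \<and>
     fst (hd (cs @ [(\<pi>2, j, None)])) = \<pi> \<and> fst (snd (hd (cs @ [(\<pi>2, j, None)]))) = i"
proof (induction rule: run.induct)
  case (rnil \<pi> i)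
  then show ?case by (intro exI[of _ "[]"]) simp
next
  case (rstep a p \<gamma> i k \<pi>' w ss \<pi>2 j)
  then obtain cs where cs: "length cs = length ss" "map (fst \<circ> snd) cs = ss"
     "concat (map (oword \<circ> snd \<circ> snd) cs) = w" "successively (stepok n Mb) (cs @ [(\<pi>2, j, None)])"
     "fst (hd (cs @ [(\<pi>2, j, None)])) = \<gamma> @ \<pi>'" "fst (snd (hd (cs @ [(\<pi>2, j, None)]))) = k" by blast
  have "stepok n Mb (p # \<pi>', i, a) (hd (cs @ [(\<pi>2, j, None)]))"
    unfolding stepok_def using cs(5,6) rstep.hyps(1,2) by (auto simp: Mblock_def)
  then have "successively (stepok n Mb) ((p # \<pi>', i, a) # cs @ [(\<pi>2, j, None)])"
    using cs(4) by (simp add: successively_Cons)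
  moreover have "map (fst \<circ> snd) ((p # \<pi>', i, a) # cs) = i # ss" using cs(2) by simp
  moreover have "concat (map (oword \<circ> snd \<circ> snd) ((p # \<pi>', i, a) # cs)) = oword a @ w" using cs(3) by simp
  moreover have "length ((p # \<pi>', i, a) # cs) = length (i # ss)" using cs(1) by simp
  ultimately show ?case by (intro exI[of _ "(p # \<pi>', i, a) # cs"]) (simp add: comp_def)
qed

lemma seg:
  assumes V: "\<And>t. bs t \<in> Mblock Mb (\<pi>s t) (\<pi>s (Suc t)) (js t) (js (Suc t)) \<and> js (Suc t) \<in> {1..n}"
  shows "a \<le> b \<Longrightarrow> (\<forall>t. a \<le> t \<and> t < b \<longrightarrow> length (\<pi>s t) > length (\<pi>s b)) \<Longrightarrow>
    \<exists>\<alpha>. \<pi>s a = \<alpha> @ \<pi>s b \<and> run n Mb \<alpha> (js a) (concat (map (oword \<circ> bs) [a..<b])) (map js [a..<b]) [] (js b)"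
proof (induction "b - a" arbitrary: a)
  case 0
  then have "a = b" by simp
  then show ?case by (intro exI[of _ "[]"]) (simp add: run.rnil)
next
  case (Suc d)
  then have ab: "a < b" by simp
  then obtain \<alpha>' where IH: "\<pi>s (Suc a) = \<alpha>' @ \<pi>s b"
     "run n Mb \<alpha>' (js (Suc a)) (concat (map (oword \<circ> bs) [Suc a..<b])) (map js [Suc a..<b]) [] (js b)"
    using Suc.hyps(1)[of "Suc a"] Suc.hyps(2) Suc.prems(2) by fastforce
  from V[of a] obtain p \<gamma> \<pi>' where st: "\<pi>s a = p # \<pi>'" "\<pi>s (Suc a) = \<gamma> @ \<pi>'" "bs a \<in> Mb p \<gamma> (js a) (js (Suc a))"
    "js (Suc a) \<in> {1..n}" unfolding Mblock_def by blast
  have "length (\<pi>s a) > length (\<pi>s b)" using Suc.prems(2) ab by blast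
  then have len: "length \<pi>' \<ge> length (\<pi>s b)" using st(1) by simp
  have eq: "\<alpha>' @ \<pi>s b = \<gamma> @ \<pi>'" using st(2) IH(1) by simp
  have "\<exists>\<alpha>''. \<pi>' = \<alpha>'' @ \<pi>s b \<and> \<gamma> @ \<alpha>'' = \<alpha>'"
  proof (cases "length \<alpha>' \<le> length \<gamma>")
    case True
    then have e: "\<alpha>' = take (length \<alpha>') \<gamma>" "\<pi>s b = drop (length \<alpha>') \<gamma> @ \<pi>'"
      using eq by (simp_all add: append_eq_append_conv_if)
    then have "length (drop (length \<alpha>') \<gamma>) = 0" using len by (metis add_le_same_cancel2 le_zero_eq length_append)
    then have "drop (length \<alpha>') \<gamma> = []" by blast
    then show ?thesis using e by (intro exI[of _ "[]"]) (metis append.right_neutral append_self_conv2 append_take_drop_id)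
  next
    case False
    then have e: "take (length \<gamma>) \<alpha>' = \<gamma>" "drop (length \<gamma>) \<alpha>' @ \<pi>s b = \<pi>'"
      using eq by (simp_all add: append_eq_append_conv_if)
    then show ?thesis by (intro exI[of _ "drop (length \<gamma>) \<alpha>'"]) (metis append_take_drop_id)
  qed
  then obtain \<alpha>'' where a2: "\<pi>' = \<alpha>'' @ \<pi>s b" "\<gamma> @ \<alpha>'' = \<alpha>'" by blast
  have "run n Mb (p # \<alpha>'') (js a) (oword (bs a) @ concat (map (oword \<circ> bs) [Suc a..<b])) (js a # map js [Suc a..<b]) [] (js b)"
    using run.rstep[where n=n and Mb=Mb, OF st(3) st(4), of \<alpha>''] IH(2) a2(2) by simp
  moreover have "[a..<b] = a # [Suc a..<b]" using ab by (simp add: upt_conv_Cons)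
  ultimately show ?case using st(1) a2(1) by (intro exI[of _ "p # \<alpha>''"]) simp
qed

lemma find_slice:
  assumes "R 0 = (0::nat)" "strict_mono R"
  shows "\<exists>m. R m \<le> t \<and> t < R (Suc m)"
proof (induction t)
  case 0
  have "R 0 < R (Suc 0)" using assms(2) by (simp add: strict_mono_def)
  then show ?case using assms(1) by (intro exI[of _ 0]) simp
next
  case (Suc t)
  then obtain m where m: "R m \<le> t" "t < R (Suc m)" by blast
  show ?case
  proof (cases "Suc t < R (Suc m)")
    case True then show ?thesis using m by (intro exI[of _ m]) simp
  next
    case False
    then have "Suc t = R (Suc m)" using m by simp
    moreover have "R (Suc m) < R (Suc (Suc m))" using assms(2) by (simp add: strict_mono_def)
    ultimately show ?thesis by (intro exI[of _ "Suc m"]) simp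
  qed
qed

lemma case_butlast: "ms \<noteq> [] \<Longrightarrow> (case butlast ms of [] \<Rightarrow> last ms | x # _ \<Rightarrow> x) = hd ms"
  by (induction ms) (auto split: list.splits)


lemma concat_singles: "concat (map (\<lambda>t. [g t]) xs) = map g xs"
  by (induction xs) auto

lemma tau_sub: "tau_z0 n I Mb p0 l \<subseteq> LG_inf n I Mb P p0 l"
proof
  fix W assume "W \<in> tau_z0 n I Mb p0 l"
  then obtain a0 w' i where W: "W = conc_fw (oword a0) w'" "i \<in> {1..n}" "a0 \<in> I i" "w' \<in> Momega n Mb l [p0] i"
    unfolding tau_z0_def by blast
  then obtain \<pi>s js bs where M: "\<pi>s 0 = [p0]" "js 0 = i"
    "\<forall>t. bs t \<in> Mblock Mb (\<pi>s t) (\<pi>s (Suc t)) (js t) (js (Suc t))"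
    "Pl n l (\<lambda>t. js (Suc t))" "concat_inf (\<lambda>t. oword (bs t)) w'"
    unfolding Momega_def by blast
  have V: "bs t \<in> Mblock Mb (\<pi>s t) (\<pi>s (Suc t)) (js t) (js (Suc t)) \<and> js (Suc t) \<in> {1..n}" for t
    using M(3,4) unfolding Pl_def by blast
  have jsn: "js t \<in> {1..n}" for t using V W(2) M(2) by (cases t) auto
  have ne: "\<pi>s t \<noteq> []" for t using V[of t] unfolding Mblock_def by auto
  define h where "h t = length (\<pi>s t)" for t
  define rc where "rc t \<longleftrightarrow> (\<forall>t'\<ge>t. h t \<le> h t')" for t
  have ex_rc: "\<exists>x\<ge>t. rc x" for t
  proof -
    obtain x where x: "t \<le> x" "\<forall>y. t \<le> y \<longrightarrow> h x \<le> h y"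
      using ex_has_least_nat[of "\<lambda>x. t \<le> x" t h] by blast
    then have "rc x" unfolding rc_def by auto
    then show ?thesis using x(1) by blast
  qed
  define r where "r = rec_nat 0 (\<lambda>_ x. LEAST t. x < t \<and> rc t)"
  have r0: "r 0 = 0" by (simp add: r_def)
  have rS: "r (Suc m) = (LEAST t. r m < t \<and> rc t)" for m by (simp add: r_def)
  have rSP: "r m < r (Suc m) \<and> rc (r (Suc m))" for m
  proof -
    obtain x where "x \<ge> Suc (r m)" "rc x" using ex_rc by blast
    then have "r m < x \<and> rc x" by simp
    then show ?thesis unfolding rS by (rule LeastI)
  qed
  have rc0: "rc 0" unfolding rc_def h_def using M(1) ne by (auto simp: Suc_le_eq)
  have rcr: "rc (r m)" for m using rSP rc0 r0 by (cases m) auto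
  have smono: "strict_mono r" unfolding strict_mono_Suc_iff using rSP by blast
  have between: "\<not> rc t" if "r m < t" "t < r (Suc m)" for m t
    using not_less_Least[of t "\<lambda>t. r m < t \<and> rc t"] that unfolding rS[symmetric] by blast
  have F4: "h (r (Suc m)) < h t" if "r m < t" "t < r (Suc m)" for m t
  proof (rule ccontr)
    assume "\<not> h (r (Suc m)) < h t"
    then have ht: "h t \<le> h (r (Suc m))" by simp
    obtain x where x: "t \<le> x" "\<forall>y. t \<le> y \<longrightarrow> h x \<le> h y"
      using ex_has_least_nat[of "\<lambda>x. t \<le> x" t h] by blast
    then have rcx: "rc x" unfolding rc_def by auto
    have "\<not> x < r (Suc m)"
    proof
      assume "x < r (Suc m)" then show False using between[of m x] rcx that x(1) by simp
    qed
    then have "h (r (Suc m)) \<le> h x" using rcr[of "Suc m"] unfolding rc_def by simp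
    then have "rc t" using ht x unfolding rc_def by fastforce
    then show False using between that by blast
  qed
  have F5: "h (r m) \<le> h (r (Suc m))" for m using rcr[of m] rSP[of m] unfolding rc_def by simp
  have seg_m: "\<exists>A Vs. zprod n Mb (js (r m), hd (\<pi>s (r m))) A (js (r (Suc m)), hd (\<pi>s (r (Suc m)))) \<and>
      lderiv (prodX n I Mb P p0) A Vs (map T (concat (map (\<lambda>t. oword (bs t)) [r m..<r (Suc m)]))) \<and>
      map tfst Vs = map js [Suc (r m)..<r (Suc m)]" for m
  proof -
    define t0 where "t0 = r m"
    define t1 where "t1 = r (Suc m)"
    have t01: "t0 < t1" using rSP unfolding t0_def t1_def by blast
    from V[of t0] obtain q \<sigma> ps where st: "\<pi>s t0 = q # \<sigma>" "\<pi>s (Suc t0) = ps @ \<sigma>"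
      "bs t0 \<in> Mb q ps (js t0) (js (Suc t0))" unfolding Mblock_def by blast
    have hyp: "\<forall>t. Suc t0 \<le> t \<and> t < t1 \<longrightarrow> length (\<pi>s t) > length (\<pi>s t1)"
      using F4[of m] unfolding t0_def t1_def h_def by auto
    obtain \<alpha> where sg: "\<pi>s (Suc t0) = \<alpha> @ \<pi>s t1"
      "run n Mb \<alpha> (js (Suc t0)) (concat (map (oword \<circ> bs) [Suc t0..<t1])) (map js [Suc t0..<t1]) [] (js t1)"
      using seg[where bs=bs and Mb=Mb and \<pi>s=\<pi>s and js=js and n=n, OF V, of "Suc t0" t1] t01 hyp by auto
    have "length (\<pi>s t1) \<ge> Suc (length \<sigma>)" using F5[of m] st(1) unfolding h_def t0_def t1_def by simp
    moreover have eq: "\<alpha> @ \<pi>s t1 = ps @ \<sigma>" using sg(1) st(2) by simp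
    moreover have "length \<alpha> + length (\<pi>s t1) = length ps + length \<sigma>" using arg_cong[OF eq, of length] by simp
    ultimately have la: "length \<alpha> < length ps" by linarith
    then have ad: "\<alpha> = take (length \<alpha>) ps" "\<pi>s t1 = drop (length \<alpha>) ps @ \<sigma>"
      using eq by (simp_all add: append_eq_append_conv_if)
    obtain ms' Vs where c: "length ms' = length \<alpha>" "set ms' \<subseteq> {1..n}"
      "(case ms' of [] \<Rightarrow> js t1 | m # _ \<Rightarrow> m) = js (Suc t0)"
      "dv (prodX n I Mb P p0) (map N (chain ms' \<alpha> (js t1))) Vs (concat (map (oword \<circ> bs) [Suc t0..<t1]))"
      "map tfst Vs = map js [Suc t0..<t1]"
      using run_chain[OF sg(2) jsn jsn, of I P p0] by blast
    define ms where "ms = ms' @ [js t1]"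
    have hdms: "hd ms = js (Suc t0)" using c(3) unfolding ms_def by (cases ms') auto
    have hdp: "hd (\<pi>s t1) = ps ! length \<alpha>" using ad(2) la by (simp add: hd_drop_conv_nth)
    have zp: "zprod n Mb (js t0, hd (\<pi>s t0)) (osym (bs t0) @ map N (chain ms' \<alpha> (js t1))) (js t1, hd (\<pi>s t1))"
      unfolding zprod_def fst_conv snd_conv
    proof (intro conjI exI)
      show "js t0 \<in> {1..n}" by (rule jsn)
      show "1 \<le> Suc (length \<alpha>)" by simp
      show "Suc (length \<alpha>) \<le> length ps" using la by simp
      show "length ms = Suc (length \<alpha>)" using c(1) ms_def by simp
      show "set ms \<subseteq> {1..n}" using c(2) jsn ms_def by auto
      show "bs t0 \<in> Mb (hd (\<pi>s t0)) ps (js t0) (hd ms)" using st(1,3) hdms by simp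
      show "osym (bs t0) @ map N (chain ms' \<alpha> (js t1)) =
            osym (bs t0) @ map N (chain (butlast ms) (take (Suc (length \<alpha>) - 1) ps) (last ms))"
        using ad(1) ms_def by simp
      show "(js t1, hd (\<pi>s t1)) = (last ms, ps ! (Suc (length \<alpha>) - 1))" using hdp ms_def by simp
    qed
    have "concat (map (\<lambda>t. oword (bs t)) [t0..<t1]) = oword (bs t0) @ concat (map (oword \<circ> bs) [Suc t0..<t1])"
      using t01 by (simp add: upt_conv_Cons comp_def)
    then have ld: "lderiv (prodX n I Mb P p0) (osym (bs t0) @ map N (chain ms' \<alpha> (js t1))) Vs
        (map T (concat (map (\<lambda>t. oword (bs t)) [t0..<t1])))"
      unfolding lderiv_dv osym_def dv_mapT using c(4) by simp
    show ?thesis using zp ld c(5) unfolding t0_def t1_def by blast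
  qed
  have "\<forall>m. \<exists>AV. zprod n Mb (js (r m), hd (\<pi>s (r m))) (fst AV) (js (r (Suc m)), hd (\<pi>s (r (Suc m)))) \<and>
      lderiv (prodX n I Mb P p0) (fst AV) (snd AV) (map T (concat (map (\<lambda>t. oword (bs t)) [r m..<r (Suc m)]))) \<and>
      map tfst (snd AV) = map js [Suc (r m)..<r (Suc m)]"
  proof
    fix m
    obtain A Vs where "zprod n Mb (js (r m), hd (\<pi>s (r m))) A (js (r (Suc m)), hd (\<pi>s (r (Suc m)))) \<and>
      lderiv (prodX n I Mb P p0) A Vs (map T (concat (map (\<lambda>t. oword (bs t)) [r m..<r (Suc m)]))) \<and>
      map tfst Vs = map js [Suc (r m)..<r (Suc m)]" using seg_m[of m] by (elim exE)
    then show "\<exists>AV. zprod n Mb (js (r m), hd (\<pi>s (r m))) (fst AV) (js (r (Suc m)), hd (\<pi>s (r (Suc m)))) \<and>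
      lderiv (prodX n I Mb P p0) (fst AV) (snd AV) (map T (concat (map (\<lambda>t. oword (bs t)) [r m..<r (Suc m)]))) \<and>
      map tfst (snd AV) = map js [Suc (r m)..<r (Suc m)]" by (intro exI[of _ "(A, Vs)"]) (simp only: fst_conv snd_conv)
  qed
  from choice[OF this] obtain f where f: "\<forall>m. zprod n Mb (js (r m), hd (\<pi>s (r m))) (fst (f m)) (js (r (Suc m)), hd (\<pi>s (r (Suc m)))) \<and>
      lderiv (prodX n I Mb P p0) (fst (f m)) (snd (f m)) (map T (concat (map (\<lambda>t. oword (bs t)) [r m..<r (Suc m)]))) \<and>
      map tfst (snd (f m)) = map js [Suc (r m)..<r (Suc m)]" by (elim exE)
  define \<alpha>' where "\<alpha>' = case_nat (osym a0) (\<lambda>m. fst (f m))"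
  define st where "st m = (js (r m), hd (\<pi>s (r m)))" for m
  define g where "g m = concat (map (\<lambda>t. oword (bs t)) [r m..<r (Suc m)])" for m
  define ws where "ws = case_nat (oword a0) g"
  define vs where "vs = case_nat [] (\<lambda>m. snd (f m))"
  have c1: "zstart n I p0 (\<alpha>' 0) (st 0)"
    unfolding zstart_def \<alpha>'_def st_def using r0 M(1,2) W(2,3) by auto
  have c2: "\<forall>m. zprod n Mb (st m) (\<alpha>' (Suc m)) (st (Suc m))"
    unfolding st_def \<alpha>'_def using f by simp
  have c3: "\<forall>m. lderiv (prodX n I Mb P p0) (\<alpha>' m) (vs m) (map T (ws m))"
  proof
    fix m show "lderiv (prodX n I Mb P p0) (\<alpha>' m) (vs m) (map T (ws m))"
    proof (cases m)
      case 0 then show ?thesis unfolding \<alpha>'_def vs_def ws_def osym_def by (simp add: lderiv.ld_refl)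
    next
      case (Suc m') then show ?thesis unfolding \<alpha>'_def vs_def ws_def g_def using f by simp
    qed
  qed
  have "concat_inf (\<lambda>t. oword (bs t)) w' = concat_inf g w'"
    unfolding g_def by (rule slices[OF r0 smono])
  then have cg: "concat_inf g w'" using M(5) by simp
  have sh: "(\<lambda>t. W (t + length (oword a0))) = w'" unfolding W(1) conc_fw_def by auto
  have c4: "concat_inf ws W"
    unfolding ws_def concat_inf_cons sh using cg by (simp add: W(1) conc_fw_def)
  define r' where "r' = case_nat 0 (\<lambda>m. Suc (r m))"
  have r'0: "r' 0 = 0" by (simp add: r'_def)
  have smono': "strict_mono r'" unfolding strict_mono_Suc_iff
  proof
    fix m show "r' m < r' (Suc m)" using rSP unfolding r'_def by (cases m) auto
  qed
  have blocks: "(\<lambda>m. map tfst (vs m) @ [fst (st m)]) = (\<lambda>m. concat (map (\<lambda>t. [js t]) [r' m..<r' (Suc m)]))"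
  proof
    fix m show "map tfst (vs m) @ [fst (st m)] = concat (map (\<lambda>t. [js t]) [r' m..<r' (Suc m)])"
    proof (cases m)
      case 0 then show ?thesis unfolding vs_def st_def r'_def concat_singles using r0 by simp
    next
      case (Suc m')
      have "Suc (r m') \<le> r (Suc m')" using rSP[of m'] by simp
      then have "[Suc (r m')..<Suc (r (Suc m'))] = [Suc (r m')..<r (Suc m')] @ [r (Suc m')]" by simp
      then show ?thesis unfolding vs_def st_def r'_def concat_singles using Suc f by simp
    qed
  qed
  have c5: "concat_inf (\<lambda>m. map tfst (vs m) @ [fst (st m)]) js"
    unfolding blocks slices[OF r'0 smono', symmetric] concat_inf_single by (rule refl)
  have c6: "Pl n l js" using Pl_shift[of n l js] M(2,4) W(2) by simp
  show "W \<in> LG_inf n I Mb P p0 l"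
    unfolding LG_inf_def
    by (rule CollectI, intro exI[of _ \<alpha>'] exI[of _ st] exI[of _ ws] exI[of _ vs] exI[of _ js] conjI; fact)
qed


lemma stepok_cong: "fst c' = fst d \<Longrightarrow> fst (snd c') = fst (snd d) \<Longrightarrow> stepok n Mb c c' \<Longrightarrow> stepok n Mb c d"
  unfolding stepok_def by simp

lemma inf_sub: "LG_inf n I Mb P p0 l \<subseteq> tau_z0 n I Mb p0 l"
proof
  fix W assume "W \<in> LG_inf n I Mb P p0 l"
  then obtain \<alpha> st ws vs s where Z0: "zstart n I p0 (\<alpha> 0) (st 0)"
    and Z: "\<forall>m. zprod n Mb (st m) (\<alpha> (Suc m)) (st (Suc m))"
    and L: "\<forall>m. lderiv (prodX n I Mb P p0) (\<alpha> m) (vs m) (map T (ws m))"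
    and CW: "concat_inf ws W"
    and CS: "concat_inf (\<lambda>m. map tfst (vs m) @ [fst (st m)]) s"
    and PS: "Pl n l s"
    unfolding LG_inf_def by blast
  from Z0 obtain m0 a0 where z0: "m0 \<in> {1..n}" "a0 \<in> I m0" "\<alpha> 0 = osym a0" "st 0 = (m0, p0)"
    unfolding zstart_def by blast
  have "dv (prodX n I Mb P p0) (map T (oword a0)) (vs 0) (ws 0)"
    using L z0(3) unfolding lderiv_dv osym_def by metis
  then have vs0: "vs 0 = []" and ws0: "ws 0 = oword a0" by (simp_all add: dv_mapT_only)
  have per: "\<exists>\<delta>. \<forall>\<sigma>. run n Mb (snd (st m) # \<sigma>) (fst (st m)) (ws (Suc m)) (fst (st m) # map tfst (vs (Suc m)))
        (snd (st (Suc m)) # \<delta> @ \<sigma>) (fst (st (Suc m)))" for m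
  proof -
    from Z[rule_format, of m] obtain a ps j ms where zp: "fst (st m) \<in> {1..n}" "1 \<le> j" "j \<le> length ps"
      "length ms = j" "set ms \<subseteq> {1..n}" "a \<in> Mb (snd (st m)) ps (fst (st m)) (hd ms)"
      "\<alpha> (Suc m) = osym a @ map N (chain (butlast ms) (take (j - 1) ps) (last ms))"
      "st (Suc m) = (last ms, ps ! (j - 1))"
      unfolding zprod_def by blast
    have "dv (prodX n I Mb P p0) (map T (oword a) @ map N (chain (butlast ms) (take (j - 1) ps) (last ms))) (vs (Suc m)) (ws (Suc m))"
      using L zp(7) unfolding lderiv_dv osym_def by metis
    then obtain w'' where w'': "ws (Suc m) = oword a @ w''"
      "dv (prodX n I Mb P p0) (map N (chain (butlast ms) (take (j - 1) ps) (last ms))) (vs (Suc m)) w''"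
      unfolding dv_mapT by blast
    have msne: "ms \<noteq> []" using zp(2,4) by auto
    have lastn: "last ms \<in> {1..n}" using zp(5) msne last_in_set by blast
    have hdn: "hd ms \<in> {1..n}" using zp(5) msne hd_in_set by blast
    have r: "run n Mb (take (j - 1) ps) (hd ms) w'' (map tfst (vs (Suc m))) [] (last ms)"
      using chain_run[OF w''(2)] zp(3,4,5) lastn case_butlast[OF msne] in_set_butlastD by fastforce
    have dj: "drop (j - 1) ps = ps ! (j - 1) # drop j ps"
      using Cons_nth_drop_Suc[of "j - 1" ps] zp(2,3) by simp
    show ?thesis
    proof (intro exI allI)
      fix \<sigma>
      have "run n Mb (take (j - 1) ps @ drop (j - 1) ps @ \<sigma>) (hd ms) w'' (map tfst (vs (Suc m))) ([] @ drop (j - 1) ps @ \<sigma>) (last ms)"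
        by (rule run_append[OF r])
      then have "run n Mb (ps @ \<sigma>) (hd ms) w'' (map tfst (vs (Suc m))) (drop (j - 1) ps @ \<sigma>) (last ms)"
        by (simp add: append_assoc[symmetric] del: append_assoc)
      from run.rstep[where n=n and Mb=Mb, OF zp(6) hdn this]
      show "run n Mb (snd (st m) # \<sigma>) (fst (st m)) (ws (Suc m)) (fst (st m) # map tfst (vs (Suc m)))
        (snd (st (Suc m)) # drop j ps @ \<sigma>) (fst (st (Suc m)))"
        using w''(1) zp(8) dj by simp
    qed
  qed
  have "\<forall>m. \<exists>\<delta>. \<forall>\<sigma>. run n Mb (snd (st m) # \<sigma>) (fst (st m)) (ws (Suc m)) (fst (st m) # map tfst (vs (Suc m)))
        (snd (st (Suc m)) # \<delta> @ \<sigma>) (fst (st (Suc m)))" by (rule allI, rule per)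
  from choice[OF this] obtain \<delta> where \<delta>: "\<forall>m \<sigma>. run n Mb (snd (st m) # \<sigma>) (fst (st m)) (ws (Suc m)) (fst (st m) # map tfst (vs (Suc m)))
        (snd (st (Suc m)) # \<delta> m @ \<sigma>) (fst (st (Suc m)))" by (elim exE)
  define \<sigma> where "\<sigma> = rec_nat [] (\<lambda>m x. \<delta> m @ x)"
  have \<sigma>0: "\<sigma> 0 = []" and \<sigma>S: "\<sigma> (Suc m) = \<delta> m @ \<sigma> m" for m by (simp_all add: \<sigma>_def)
  define E where "E m = (snd (st (Suc m)) # \<sigma> (Suc m), fst (st (Suc m)), None :: 'a option)" for m
  have absrun: "run n Mb (snd (st m) # \<sigma> m) (fst (st m)) (ws (Suc m)) (fst (st m) # map tfst (vs (Suc m)))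
        (snd (st (Suc m)) # \<sigma> (Suc m)) (fst (st (Suc m)))" for m
    using \<delta> \<sigma>S by simp
  have "\<forall>m. \<exists>cs. length cs = Suc (length (vs (Suc m))) \<and> map (fst \<circ> snd) cs = fst (st m) # map tfst (vs (Suc m)) \<and>
     concat (map (oword \<circ> snd \<circ> snd) cs) = ws (Suc m) \<and> successively (stepok n Mb) (cs @ [E m]) \<and>
     fst (hd (cs @ [E m])) = snd (st m) # \<sigma> m \<and> fst (snd (hd (cs @ [E m]))) = fst (st m)"
    using run_list[OF absrun] unfolding E_def by fastforce
  from choice[OF this] obtain cs where cs: "\<forall>m. length (cs m) = Suc (length (vs (Suc m))) \<and> map (fst \<circ> snd) (cs m) = fst (st m) # map tfst (vs (Suc m)) \<and>
     concat (map (oword \<circ> snd \<circ> snd) (cs m)) = ws (Suc m) \<and> successively (stepok n Mb) (cs m @ [E m]) \<and>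
     fst (hd (cs m @ [E m])) = snd (st m) # \<sigma> m \<and> fst (snd (hd (cs m @ [E m]))) = fst (st m)" by (elim exE)
  have csne: "cs m \<noteq> []" for m using cs by (metis Zero_not_Suc list.size(3))
  have csl: "length (cs m) = Suc (length (vs (Suc m)))" for m using cs by blast
  have csst: "map (fst \<circ> snd) (cs m) = fst (st m) # map tfst (vs (Suc m))" for m using cs by blast
  have csw: "concat (map (oword \<circ> snd \<circ> snd) (cs m)) = ws (Suc m)" for m using cs by blast
  have css: "successively (stepok n Mb) (cs m @ [E m])" for m using cs by blast
  have cshd0: "fst (hd (cs m @ [E m])) = snd (st m) # \<sigma> m" "fst (snd (hd (cs m @ [E m]))) = fst (st m)" for m
    using cs by blast+
  have hde: "hd (cs m @ [E m]) = hd (cs m)" for m using csne[of m] by simp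
  have cshd: "fst (hd (cs m)) = snd (st m) # \<sigma> m" "fst (snd (hd (cs m))) = fst (st m)" for m
    using cshd0[of m] unfolding hde by blast+
  obtain C where C: "concat_inf cs C" using concat_inf_exists[of cs] csne by blast
  define R where "R m = (\<Sum>i<m. length (cs i))" for m
  have R0: "R 0 = 0" by (simp add: R_def)
  have RS: "R (Suc m) = R m + length (cs m)" for m by (simp add: R_def)
  have smR: "strict_mono R" unfolding strict_mono_Suc_iff RS using csne by auto
  have Cpt: "C (R m + t) = cs m ! t" if "t < length (cs m)" for m t
    using C that unfolding concat_inf_def R_def by blast
  have slice: "map C [R m..<R (Suc m)] = cs m" for m
    by (rule nth_equalityI) (simp_all add: RS Cpt)
  have valid: "stepok n Mb (C t) (C (Suc t))" for t
  proof -
    obtain m where m: "R m \<le> t" "t < R (Suc m)" using find_slice[OF R0 smR] by blast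
    define o' where "o' = t - R m"
    have t: "t = R m + o'" "o' < length (cs m)" using m RS unfolding o'_def by auto
    have sn: "stepok n Mb ((cs m @ [E m]) ! o') ((cs m @ [E m]) ! Suc o')"
      using successively_nth[OF css[of m], of o'] t(2) by simp
    show ?thesis
    proof (cases "Suc o' < length (cs m)")
      case True
      then show ?thesis using sn t Cpt[of o' m] Cpt[of "Suc o'" m] by (simp add: nth_append)
    next
      case False
      then have so: "Suc o' = length (cs m)" using t(2) by simp
      then have "Suc t = R (Suc m) + 0" using t RS by simp
      then have cs1: "C (Suc t) = hd (cs (Suc m))" using Cpt[of 0 "Suc m"] csne[of "Suc m"] by (simp add: hd_conv_nth)
      have "stepok n Mb (cs m ! o') (E m)" using sn so t(2) by (simp add: nth_append)
      then have so2: "stepok n Mb (C t) (E m)" using t Cpt[of o' m] by simp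
      have e1: "fst (E m) = fst (C (Suc t))" "fst (snd (E m)) = fst (snd (C (Suc t)))"
        using cs1 cshd[of "Suc m"] unfolding E_def by simp_all
      show ?thesis by (rule stepok_cong[OF e1 so2])
    qed
  qed
  define \<pi>s where "\<pi>s t = fst (C t)" for t
  define js where "js t = fst (snd (C t))" for t
  define bs where "bs t = snd (snd (C t))" for t
  define w' where "w' t = W (t + length (oword a0))" for t
  have C0: "C 0 = hd (cs 0)" using Cpt[of 0 0] csne[of 0] R0 by (simp add: hd_conv_nth)
  have \<pi>s0: "\<pi>s 0 = [p0]" using C0 cshd(1)[of 0] z0(4) \<sigma>0 unfolding \<pi>s_def by simp
  have js0: "js 0 = m0" using C0 cshd(2)[of 0] z0(4) unfolding js_def by simp
  have V: "bs t \<in> Mblock Mb (\<pi>s t) (\<pi>s (Suc t)) (js t) (js (Suc t))" for t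
    using valid[of t] unfolding stepok_def bs_def \<pi>s_def js_def by blast
  define X where "X m = fst (st m) # map tfst (vs (Suc m))" for m
  define Y where "Y m = map tfst (vs m) @ [fst (st m)]" for m
  have CPY: "CP Y (Suc m) = CP X m @ [fst (st m)]" for m
  proof (induction m)
    case 0 then show ?case by (simp add: Y_def vs0)
  next
    case (Suc m)
    have "CP Y (Suc (Suc m)) = CP Y (Suc m) @ Y (Suc m)" by simp
    also have "\<dots> = CP X m @ [fst (st m)] @ Y (Suc m)" by (simp only: Suc.IH append_assoc)
    also have "\<dots> = CP X (Suc m) @ [fst (st (Suc m))]" by (simp add: X_def Y_def)
    finally show ?case .
  qed
  have "concat_inf Y s \<longleftrightarrow> concat_inf X s"
  proof (rule concat_inf_dom)
    fix m show "\<exists>m' zs. CP Y m @ zs = CP X m'"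
    proof (cases m)
      case 0 then show ?thesis by (intro exI[of _ 0] exI[of _ "[]"]) simp
    next
      case (Suc m')
      have "CP Y m @ map tfst (vs (Suc m')) = CP X (Suc m')" using CPY[of m'] Suc by (simp add: X_def)
      then show ?thesis by blast
    qed
  next
    fix m show "\<exists>m' zs. CP X m @ zs = CP Y m'"
      by (intro exI[of _ "Suc m"] exI[of _ "[fst (st m)]"]) (rule sym, rule CPY)
  qed
  then have "concat_inf X s" using CS unfolding Y_def by simp
  moreover have "X = (\<lambda>m. concat (map (\<lambda>t. [js t]) [R m..<R (Suc m)]))"
  proof
    fix m
    have "concat (map (\<lambda>t. [js t]) [R m..<R (Suc m)]) = map (fst \<circ> snd) (map C [R m..<R (Suc m)])"
      unfolding concat_singles js_def by simp
    then show "X m = concat (map (\<lambda>t. [js t]) [R m..<R (Suc m)])" unfolding slice X_def csst by simp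
  qed
  ultimately have "concat_inf (\<lambda>t. [js t]) s" using slices[OF R0 smR, of "\<lambda>t. [js t]" s] by simp
  then have sjs: "s = js" by (simp add: concat_inf_single)
  have Pl: "Pl n l (\<lambda>t. js (Suc t))" using PS sjs Pl_shift by blast
  have wsc: "ws = case_nat (ws 0) (\<lambda>m. ws (Suc m))"
  proof
    fix m show "ws m = case_nat (ws 0) (\<lambda>m. ws (Suc m)) m" by (cases m) simp_all
  qed
  have "concat_inf (case_nat (ws 0) (\<lambda>m. ws (Suc m))) W" using CW wsc by simp
  then have cw1: "\<forall>t<length (oword a0). W t = oword a0 ! t" and cw2: "concat_inf (\<lambda>m. ws (Suc m)) w'"
    unfolding concat_inf_cons ws0 w'_def by blast+
  have "(\<lambda>m. ws (Suc m)) = (\<lambda>m. concat (map (\<lambda>t. oword (bs t)) [R m..<R (Suc m)]))"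
  proof
    fix m
    have "concat (map (\<lambda>t. oword (bs t)) [R m..<R (Suc m)]) = concat (map (oword \<circ> snd \<circ> snd) (map C [R m..<R (Suc m)]))"
      unfolding bs_def by (simp add: comp_def)
    then show "ws (Suc m) = concat (map (\<lambda>t. oword (bs t)) [R m..<R (Suc m)])" unfolding slice csw by simp
  qed
  then have "concat_inf (\<lambda>t. oword (bs t)) w'" using cw2 slices[OF R0 smR, of "\<lambda>t. oword (bs t)" w'] by simp
  then have "w' \<in> Momega n Mb l [p0] m0"
    unfolding Momega_def using \<pi>s0 js0 V Pl by blast
  moreover have "W = conc_fw (oword a0) w'"
  proof
    fix t show "W t = conc_fw (oword a0) w' t"
      using cw1 unfolding conc_fw_def w'_def by simp
  qed
  ultimately show "W \<in> tau_z0 n I Mb p0 l" unfolding tau_z0_def using z0 by blast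
qed


theorem theorem14:
  fixes n l :: nat
    and I P :: "nat \<Rightarrow> ('a::finite) option set"
    and Mb :: "('g::finite) \<Rightarrow> 'g list \<Rightarrow> nat \<Rightarrow> nat \<Rightarrow> 'a option set"
    and p0 :: 'g
  assumes "pd_finite n Mb"
    and "l \<le> n"
  shows "LG n I Mb P p0 l = (sigma_x0 n I Mb P p0, tau_z0 n I Mb p0 l)"
proof -
  have "LG_inf n I Mb P p0 l = tau_z0 n I Mb p0 l" by (rule equalityI[OF inf_sub tau_sub])
  then show ?thesis unfolding LG_def LG_fin_eq by simp
qed

end
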